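(* Let $k$ be a field, $n\ge 1$, and let $Q_H$ be the quiver with vertices $x_1,\ldots,x_{n+1},y_1,\ldots,y_n$ and arrows $r_i:x_i\to y_i$, $l_i:y_i\to x_{i+1}$, $a_i:x_i\to x_{i+1}$ for $i=1,\ldots,n$. Put $m_{0i}=a_1\cdots a_{i-1}$ (the stationary path at $x_1$ if $i=1$), $A_i=r_il_i$, $T_i=A_ia_i^{-1}$ and $\alpha_i=m_{0i}T_im_{0i}^{-1}$, a closed walk at $x_1$. Let $i\ge1$, $k'\ge0$ with $i+k'\le n$, and let $I$ be an admissible ideal of $kQ_H$ in which $a_ia_{i+1}\cdots a_{i+k'}+A_iA_{i+1}\cdots A_{i+k'}$ is a minimal relation. Then $\tilde\alpha_i\tilde\alpha_{i+1}\cdots\tilde\alpha_{i+k'}=1$ in $\pi_1(Q_H,I,x_1)$.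
   Context: An ideal $I$ of $kQ$ is admissible if $F^m\subseteq I\subseteq F^2$ for some $m\ge2$, $F$ the arrow ideal. For vertices $x,y$, $I(x,y)=e_x(kQ)e_y\cap I$; a relation $\sum_{j=1}^{r}\lambda_j w_j\in I(x,y)$ ($\lambda_j\in k^*$, $w_j$ distinct paths $x\to y$) is minimal if $r\ge2$ and no proper nonempty subsum lies in $I(x,y)$. Walks are composable sequences of arrows and formal inverses $\alpha^{-1}$. Homotopy $\sim$ is the smallest equivalence relation on walks with $\alpha\alpha^{-1}\sim e_{s(\alpha)}$, $\alpha^{-1}\alpha\sim e_{t(\alpha)}$, $w_j\sim w_l$ for paths occurring in a common minimal relation of $I$, and $u\sim v\Rightarrow wuw'\sim wvw'$. $\pi_1(Q,I,x_1)$ is the group of homotopy classes $\tilde w$ of closed walks at $x_1$. *)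

theory Defs
  imports "HOL-Algebra.Group"
begin

record ('v,'a) quiver =
  verts :: "'v set"
  arrs  :: "'a set"
  src   :: "'a \<Rightarrow> 'v"
  tgt   :: "'a \<Rightarrow> 'v"

text \<open>A path is a start vertex together with a list of arrows, composed left to right
  (so the path r l first traverses r, then l).  The stationary path e_v is (v, []).\<close>
type_synonym ('v,'a) qpath = "'v \<times> 'a list"

fun chain :: "('v,'a) quiver \<Rightarrow> 'v \<Rightarrow> 'a list \<Rightarrow> bool" where
  "chain Q v [] = True"
| "chain Q v (e # es) = (src Q e = v \<and> chain Q (tgt Q e) es)"

fun pend :: "('v,'a) quiver \<Rightarrow> 'v \<Rightarrow> 'a list \<Rightarrow> 'v" where
  "pend Q v [] = v"
| "pend Q v (e # es) = pend Q (tgt Q e) es"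

definition is_path :: "('v,'a) quiver \<Rightarrow> ('v,'a) qpath \<Rightarrow> bool" where
  "is_path Q p = (fst p \<in> verts Q \<and> set (snd p) \<subseteq> arrs Q \<and> chain Q (fst p) (snd p))"

definition path_tgt :: "('v,'a) quiver \<Rightarrow> ('v,'a) qpath \<Rightarrow> 'v" where
  "path_tgt Q p = pend Q (fst p) (snd p)"

text \<open>Elements of kQ: finitely supported k-linear combinations of paths, i.e. functions
  from paths to k with finite support consisting of paths of Q.\<close>
definition pa_carrier :: "('v,'a) quiver \<Rightarrow> (('v,'a) qpath \<Rightarrow> 'k::field) set" where
  "pa_carrier Q = {f. finite {p. f p \<noteq> 0} \<and> (\<forall>p. f p \<noteq> 0 \<longrightarrow> is_path Q p)}"

definition pa_mult :: "('v,'a) quiver \<Rightarrow> (('v,'a) qpath \<Rightarrow> 'k::field)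
    \<Rightarrow> (('v,'a) qpath \<Rightarrow> 'k) \<Rightarrow> (('v,'a) qpath \<Rightarrow> 'k)" where
  "pa_mult Q f g = (\<lambda>p. if is_path Q p then
      (\<Sum>j\<le>length (snd p). f (fst p, take j (snd p)) *
                           g (pend Q (fst p) (take j (snd p)), drop j (snd p)))
    else 0)"

definition pa_ideal :: "('v,'a) quiver \<Rightarrow> (('v,'a) qpath \<Rightarrow> 'k::field) set \<Rightarrow> bool" where
  "pa_ideal Q I =
    (I \<subseteq> pa_carrier Q \<and> (\<lambda>p. 0) \<in> I \<and>
     (\<forall>f\<in>I. \<forall>g\<in>I. (\<lambda>p. f p + g p) \<in> I) \<and>
     (\<forall>c f. f \<in> I \<longrightarrow> (\<lambda>p. c * f p) \<in> I) \<and>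
     (\<forall>f\<in>I. \<forall>g\<in>pa_carrier Q. pa_mult Q f g \<in> I \<and> pa_mult Q g f \<in> I))"

text \<open>F^m, the m-th power of the arrow ideal F: the span of all paths of length at least m.\<close>
definition arrow_pow :: "('v,'a) quiver \<Rightarrow> nat \<Rightarrow> (('v,'a) qpath \<Rightarrow> 'k::field) set" where
  "arrow_pow Q m = {f \<in> pa_carrier Q. \<forall>p. length (snd p) < m \<longrightarrow> f p = 0}"

definition admissible :: "('v,'a) quiver \<Rightarrow> (('v,'a) qpath \<Rightarrow> 'k::field) set \<Rightarrow> bool" where
  "admissible Q I = (pa_ideal Q I \<and> (\<exists>m\<ge>2. arrow_pow Q m \<subseteq> I \<and> I \<subseteq> arrow_pow Q 2))"

definition minimal_relation :: "('v,'a) quiver \<Rightarrow> (('v,'a) qpath \<Rightarrow> 'k::field) set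
    \<Rightarrow> 'v \<Rightarrow> 'v \<Rightarrow> (('v,'a) qpath \<Rightarrow> 'k) \<Rightarrow> bool" where
  "minimal_relation Q I x y \<rho> =
    (\<rho> \<in> I \<and> (\<forall>p. \<rho> p \<noteq> 0 \<longrightarrow> fst p = x \<and> path_tgt Q p = y) \<and>
     card {p. \<rho> p \<noteq> 0} \<ge> 2 \<and>
     (\<forall>S. S \<subset> {p. \<rho> p \<noteq> 0} \<and> S \<noteq> {} \<longrightarrow> (\<lambda>p. if p \<in> S then \<rho> p else 0) \<notin> I))"

datatype 'a letter = Fw 'a | Bw 'a

fun larr :: "'a letter \<Rightarrow> 'a" where
  "larr (Fw a) = a" | "larr (Bw a) = a"

fun lsrc :: "('v,'a) quiver \<Rightarrow> 'a letter \<Rightarrow> 'v" where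
  "lsrc Q (Fw a) = src Q a" | "lsrc Q (Bw a) = tgt Q a"

fun ltgt :: "('v,'a) quiver \<Rightarrow> 'a letter \<Rightarrow> 'v" where
  "ltgt Q (Fw a) = tgt Q a" | "ltgt Q (Bw a) = src Q a"

fun flip_letter :: "'a letter \<Rightarrow> 'a letter" where
  "flip_letter (Fw a) = Bw a" | "flip_letter (Bw a) = Fw a"

fun wchain :: "('v,'a) quiver \<Rightarrow> 'v \<Rightarrow> 'a letter list \<Rightarrow> bool" where
  "wchain Q v [] = True"
| "wchain Q v (l # ls) = (lsrc Q l = v \<and> wchain Q (ltgt Q l) ls)"

fun wend :: "('v,'a) quiver \<Rightarrow> 'v \<Rightarrow> 'a letter list \<Rightarrow> 'v" where
  "wend Q v [] = v"
| "wend Q v (l # ls) = wend Q (ltgt Q l) ls"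

definition is_walk :: "('v,'a) quiver \<Rightarrow> 'v \<times> 'a letter list \<Rightarrow> bool" where
  "is_walk Q w = (fst w \<in> verts Q \<and> (\<forall>l\<in>set (snd w). larr l \<in> arrs Q) \<and> wchain Q (fst w) (snd w))"

definition walk_inv :: "'a letter list \<Rightarrow> 'a letter list" where
  "walk_inv ls = rev (map flip_letter ls)"

inductive htpy :: "('v,'a) quiver \<Rightarrow> (('v,'a) qpath \<Rightarrow> 'k::field) set
    \<Rightarrow> 'v \<times> 'a letter list \<Rightarrow> 'v \<times> 'a letter list \<Rightarrow> bool"
  for Q :: "('v,'a) quiver" and I :: "(('v,'a) qpath \<Rightarrow> 'k::field) set" where
  cancel_fw: "a \<in> arrs Q \<Longrightarrow> htpy Q I (src Q a, [Fw a, Bw a]) (src Q a, [])"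
| cancel_bw: "a \<in> arrs Q \<Longrightarrow> htpy Q I (tgt Q a, [Bw a, Fw a]) (tgt Q a, [])"
| rel: "minimal_relation Q I x y \<rho> \<Longrightarrow> \<rho> p \<noteq> 0 \<Longrightarrow> \<rho> q \<noteq> 0 \<Longrightarrow>
        htpy Q I (fst p, map Fw (snd p)) (fst q, map Fw (snd q))"
| refl: "is_walk Q w \<Longrightarrow> htpy Q I w w"
| sym: "htpy Q I u v \<Longrightarrow> htpy Q I v u"
| trans: "htpy Q I u v \<Longrightarrow> htpy Q I v w \<Longrightarrow> htpy Q I u w"
| cong: "htpy Q I u v \<Longrightarrow> is_walk Q (z, ws) \<Longrightarrow> wend Q z ws = fst u \<Longrightarrow>
         is_walk Q (wend Q (fst u) (snd u), ws') \<Longrightarrow>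
         htpy Q I (z, ws @ snd u @ ws') (z, ws @ snd v @ ws')"

definition hclass :: "('v,'a) quiver \<Rightarrow> (('v,'a) qpath \<Rightarrow> 'k::field) set
    \<Rightarrow> 'v \<times> 'a letter list \<Rightarrow> ('v \<times> 'a letter list) set" where
  "hclass Q I w = {w'. htpy Q I w w'}"

definition pi1 :: "('v,'a) quiver \<Rightarrow> (('v,'a) qpath \<Rightarrow> 'k::field) set \<Rightarrow> 'v
    \<Rightarrow> ('v \<times> 'a letter list) set monoid" where
  "pi1 Q I x =
    \<lparr>carrier = {hclass Q I (x, ws) | ws. is_walk Q (x, ws) \<and> wend Q x ws = x},
     mult = (\<lambda>A B. hclass Q I (x, snd (SOME a. a \<in> A) @ snd (SOME b. b \<in> B))),
     one = hclass Q I (x, [])\<rparr>"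

datatype qhv = X nat | Y nat
datatype qha = Rarr nat | Larr nat | Aarr nat

fun qh_src :: "qha \<Rightarrow> qhv" where
  "qh_src (Rarr i) = X i" | "qh_src (Larr i) = Y i" | "qh_src (Aarr i) = X i"

fun qh_tgt :: "qha \<Rightarrow> qhv" where
  "qh_tgt (Rarr i) = Y i" | "qh_tgt (Larr i) = X (Suc i)" | "qh_tgt (Aarr i) = X (Suc i)"

definition QH :: "nat \<Rightarrow> (qhv, qha) quiver" where
  "QH n = \<lparr>verts = {X j | j. 1 \<le> j \<and> j \<le> n + 1} \<union> {Y j | j. 1 \<le> j \<and> j \<le> n},
           arrs = {Rarr j | j. 1 \<le> j \<and> j \<le> n} \<union> {Larr j | j. 1 \<le> j \<and> j \<le> n}
                  \<union> {Aarr j | j. 1 \<le> j \<and> j \<le> n},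
           src = qh_src, tgt = qh_tgt\<rparr>"

definition m0 :: "nat \<Rightarrow> qha letter list" where
  "m0 i = map (\<lambda>j. Fw (Aarr j)) [1..<i]"

definition T_walk :: "nat \<Rightarrow> qha letter list" where
  "T_walk i = [Fw (Rarr i), Fw (Larr i), Bw (Aarr i)]"

definition alpha :: "nat \<Rightarrow> qha letter list" where
  "alpha i = m0 i @ T_walk i @ walk_inv (m0 i)"

definition a_path :: "nat \<Rightarrow> nat \<Rightarrow> (qhv, qha) qpath" where
  "a_path i k = (X i, map Aarr [i..<i + k + 1])"

definition A_path :: "nat \<Rightarrow> nat \<Rightarrow> (qhv, qha) qpath" where
  "A_path i k = (X i, concat (map (\<lambda>j. [Rarr j, Larr j]) [i..<i + k + 1]))"

end

theory Submission
  imports Defs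
begin

definition qwf :: "('v,'a) quiver \<Rightarrow> bool" where
  "qwf Q = (\<forall>a\<in>arrs Q. src Q a \<in> verts Q \<and> tgt Q a \<in> verts Q)"

lemma wchain_append: "wchain Q v (xs@ys) = (wchain Q v xs \<and> wchain Q (wend Q v xs) ys)"
  by (induction xs arbitrary: v) auto

lemma wend_append: "wend Q v (xs@ys) = wend Q (wend Q v xs) ys"
  by (induction xs arbitrary: v) auto

lemma wchain_map_Fw: "wchain Q v (map Fw ps) = chain Q v ps"
  by (induction ps arbitrary: v) auto

lemma wend_map_Fw: "wend Q v (map Fw ps) = pend Q v ps"
  by (induction ps arbitrary: v) auto

lemma wend_in_verts:
  "qwf Q \<Longrightarrow> v \<in> verts Q \<Longrightarrow> \<forall>l\<in>set ws. larr l \<in> arrs Q \<Longrightarrow> wchain Q v ws \<Longrightarrow> wend Q v ws \<in> verts Q"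
proof (induction ws arbitrary: v)
  case Nil then show ?case by simp
next
  case (Cons l ws)
  have "ltgt Q l \<in> verts Q" using Cons.prems by (cases l) (auto simp: qwf_def)
  then show ?case using Cons by auto
qed

lemma is_walk_append:
  assumes "qwf Q"
  shows "is_walk Q (v, xs@ys) = (is_walk Q (v,xs) \<and> is_walk Q (wend Q v xs, ys))"
  using wend_in_verts[OF assms, of v xs] by (auto simp: is_walk_def wchain_append)

lemma htpy_props:
  assumes wf: "qwf Q" and IC: "I \<subseteq> pa_carrier Q"
  shows "htpy Q I u v \<Longrightarrow> is_walk Q u \<and> is_walk Q v \<and> fst u = fst v \<and>
     wend Q (fst u) (snd u) = wend Q (fst v) (snd v)"
proof (induction rule: htpy.induct)
  case (cancel_fw a) then show ?case using wf by (auto simp: is_walk_def qwf_def)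
next
  case (cancel_bw a) then show ?case using wf by (auto simp: is_walk_def qwf_def)
next
  case (rel x y \<rho> p q)
  have "\<rho> \<in> pa_carrier Q" using rel IC by (auto simp: minimal_relation_def)
  then have "\<forall>p. \<rho> p \<noteq> 0 \<longrightarrow> is_path Q p" unfolding pa_carrier_def by blast
  then have "is_path Q p" "is_path Q q" using rel by blast+
  moreover have "fst p = x" "fst q = x" "path_tgt Q p = y" "path_tgt Q q = y"
  proof -
    have "\<forall>p. \<rho> p \<noteq> 0 \<longrightarrow> fst p = x \<and> path_tgt Q p = y"
      using rel(1) unfolding minimal_relation_def by blast
    then show "fst p = x" "fst q = x" "path_tgt Q p = y" "path_tgt Q q = y" using rel(2,3) by blast+
  qed
  ultimately show ?case
    by (auto simp: is_walk_def is_path_def wchain_map_Fw wend_map_Fw path_tgt_def)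
next
  case (refl w) then show ?case by simp
next
  case (sym u v) then show ?case by metis
next
  case (trans u v w) then show ?case by metis
next
  case (cong u v z ws ws')
  obtain y su y' sv where u: "u = (y, su)" and v: "v = (y', sv)" by (cases u, cases v) auto
  have yy: "y' = y" using cong.IH u v by simp
  show ?case using cong wf unfolding u v yy by (auto simp: is_walk_append wend_append)
qed

lemma htpy_mid:
  assumes wf: "qwf Q" and IC: "I \<subseteq> pa_carrier Q"
    and h: "htpy Q I (y,u) (y,v)" and w: "is_walk Q (z, ws@u@ws')" and e: "wend Q z ws = y"
  shows "htpy Q I (z, ws@u@ws') (z, ws@v@ws')"
proof -
  have "is_walk Q (z, ws)" "is_walk Q (wend Q y u, ws')"
    using w e is_walk_append[OF wf] by auto
  from htpy.cong[OF h this(1) _ ] this(2) e show ?thesis by simp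
qed

lemma cancel_letter:
  assumes wf: "qwf Q" and IC: "I \<subseteq> pa_carrier Q"
    and w: "is_walk Q (z, ws @ [c, flip_letter c] @ ws')"
  shows "htpy Q I (z, ws @ [c, flip_letter c] @ ws') (z, ws @ ws')"
proof -
  have c: "larr c \<in> arrs Q" and e: "wend Q z ws = lsrc Q c"
    using w by (auto simp: is_walk_def wchain_append)
  show ?thesis
  proof (cases c)
    case (Fw a)
    have "htpy Q I (src Q a, [Fw a, Bw a]) (src Q a, [])" using c Fw by (auto intro: htpy.cancel_fw)
    from htpy_mid[OF wf IC this, of z ws ws'] w e Fw show ?thesis by simp
  next
    case (Bw a)
    have "htpy Q I (tgt Q a, [Bw a, Fw a]) (tgt Q a, [])" using c Bw by (auto intro: htpy.cancel_bw)
    from htpy_mid[OF wf IC this, of z ws ws'] w e Bw show ?thesis by simp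
  qed
qed

lemma walk_inv_Cons: "walk_inv (c # u) = walk_inv u @ [flip_letter c]"
  by (simp add: walk_inv_def)

lemma walk_inv_append: "walk_inv (xs @ ys) = walk_inv ys @ walk_inv xs"
  by (simp add: walk_inv_def)

lemma flip_flip[simp]: "flip_letter (flip_letter c) = c" by (cases c) auto

lemma walk_inv_inv[simp]: "walk_inv (walk_inv u) = u"
  by (simp add: walk_inv_def rev_map comp_def)

lemma cancel_walk:
  assumes wf: "qwf Q" and IC: "I \<subseteq> pa_carrier Q"
  shows "is_walk Q (z, ws @ u @ walk_inv u @ ws') \<Longrightarrow>
     htpy Q I (z, ws @ u @ walk_inv u @ ws') (z, ws @ ws')"
proof (induction u arbitrary: ws ws')
  case Nil
  then show ?case by (simp add: walk_inv_def htpy.refl)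
next
  case (Cons c u)
  have eq: "ws @ (c # u) @ walk_inv (c # u) @ ws' = (ws @ [c]) @ u @ walk_inv u @ (flip_letter c # ws')"
    by (simp add: walk_inv_Cons)
  have h1: "htpy Q I (z, ws @ (c # u) @ walk_inv (c # u) @ ws') (z, (ws @ [c]) @ (flip_letter c # ws'))"
    using Cons.IH[of "ws @ [c]" "flip_letter c # ws'"] Cons.prems eq by simp
  have w2: "is_walk Q (z, ws @ [c, flip_letter c] @ ws')"
    using htpy_props[OF wf IC h1] by simp
  have h2: "htpy Q I (z, ws @ [c, flip_letter c] @ ws') (z, ws @ ws')"
    by (rule cancel_letter[OF wf IC w2])
  show ?case using htpy.trans[OF h1] h2 by simp
qed

lemma hclass_eq: "htpy Q I w w' \<Longrightarrow> hclass Q I w = hclass Q I w'"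
  unfolding hclass_def by (auto intro: htpy.trans htpy.sym)

lemma pi1_mult:
  assumes wf: "qwf Q" and IC: "I \<subseteq> pa_carrier Q"
    and u: "is_walk Q (x,u)" "wend Q x u = x" and v: "is_walk Q (x,v)" "wend Q x v = x"
  shows "hclass Q I (x,u) \<otimes>\<^bsub>pi1 Q I x\<^esub> hclass Q I (x,v) = hclass Q I (x, u@v)"
proof -
  define a where "a = (SOME a. a \<in> hclass Q I (x,u))"
  define b where "b = (SOME b. b \<in> hclass Q I (x,v))"
  have "a \<in> hclass Q I (x,u)" unfolding a_def
    by (rule someI[of _ "(x,u)"]) (simp add: hclass_def htpy.refl u)
  then have ha: "htpy Q I (x,u) a" by (simp add: hclass_def)
  have "b \<in> hclass Q I (x,v)" unfolding b_def
    by (rule someI[of _ "(x,v)"]) (simp add: hclass_def htpy.refl v)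
  then have hb: "htpy Q I (x,v) b" by (simp add: hclass_def)
  note pa = htpy_props[OF wf IC ha] and pb = htpy_props[OF wf IC hb]
  obtain xa ua where aeq: "a = (xa, ua)" by (cases a)
  obtain xb ub where beq: "b = (xb, ub)" by (cases b)
  have xa: "xa = x" using pa aeq by simp
  have xb: "xb = x" using pb beq by simp
  have ha': "htpy Q I (x,u) (x, snd a)" using ha aeq xa by simp
  have hb': "htpy Q I (x,v) (x, snd b)" using hb beq xb by simp
  have wa: "is_walk Q (x, snd a)" "wend Q x (snd a) = x" using pa u aeq xa by simp_all
  have h1: "htpy Q I (x, u@v) (x, snd a @ v)"
    using htpy_mid[OF wf IC ha', of x "[]" v] u v is_walk_append[OF wf] by simp
  have h2: "htpy Q I (x, snd a @ v) (x, snd a @ snd b)"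
    using htpy_mid[OF wf IC hb', of x "snd a" "[]"] wa v is_walk_append[OF wf] by simp
  have "hclass Q I (x, u@v) = hclass Q I (x, snd a @ snd b)"
    by (rule hclass_eq[OF htpy.trans[OF h1 h2]])
  then show ?thesis by (simp add: pi1_def a_def b_def)
qed

lemma qwf_QH: "qwf (QH n)"
  unfolding qwf_def QH_def by auto

lemma src_QH[simp]: "src (QH n) = qh_src" and tgt_QH[simp]: "tgt (QH n) = qh_tgt"
  by (simp_all add: QH_def)

lemma arrs_QH: "a \<in> arrs (QH n) \<longleftrightarrow> (\<exists>j. 1 \<le> j \<and> j \<le> n \<and> (a = Rarr j \<or> a = Larr j \<or> a = Aarr j))"
  by (auto simp: QH_def)

lemma verts_X: "1 \<le> j \<Longrightarrow> j \<le> n + 1 \<Longrightarrow> X j \<in> verts (QH n)"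
  by (auto simp: QH_def)

lemma achain:
  "a \<le> b \<Longrightarrow> wchain (QH n) (X a) (map (\<lambda>j. Fw (Aarr j)) [a..<b]) \<and>
            wend (QH n) (X a) (map (\<lambda>j. Fw (Aarr j)) [a..<b]) = X b"
proof (induction b)
  case 0 then show ?case by simp
next
  case (Suc b)
  show ?case
  proof (cases "a = Suc b")
    case True then show ?thesis by simp
  next
    case False
    then have "a \<le> b" using Suc by simp
    then show ?thesis using Suc.IH by (simp add: wchain_append wend_append)
  qed
qed

lemma walk_inv_chain:
  "wchain Q v ws \<Longrightarrow> wchain Q (wend Q v ws) (walk_inv ws) \<and> wend Q (wend Q v ws) (walk_inv ws) = v"
proof (induction ws arbitrary: v)
  case Nil then show ?case by (simp add: walk_inv_def)
next
  case (Cons c ws)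
  have l1: "lsrc Q (flip_letter c) = ltgt Q c" "ltgt Q (flip_letter c) = lsrc Q c" by (cases c; simp)+
  show ?case using Cons l1 by (auto simp: walk_inv_Cons wchain_append wend_append)
qed

lemma larr_flip[simp]: "larr (flip_letter c) = larr c" by (cases c) auto

lemma larr_walk_inv': "(\<forall>l\<in>set (walk_inv ws). P (larr l)) = (\<forall>l\<in>set ws. P (larr l))"
  by (simp add: walk_inv_def)

lemma m0_walk:
  assumes "1 \<le> j" "j \<le> n + 1"
  shows "wchain (QH n) (X 1) (m0 j)" "wend (QH n) (X 1) (m0 j) = X j"
    "\<forall>l\<in>set (m0 j). larr l \<in> arrs (QH n)"
  using achain[of 1 j n] assms by (auto simp: m0_def arrs_QH)

lemma alpha_walk:
  assumes "1 \<le> j" "j \<le> n"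
  shows "is_walk (QH n) (X 1, alpha j) \<and> wend (QH n) (X 1) (alpha j) = X 1"
proof -
  note m = m0_walk[of j n] 
  have inv: "wchain (QH n) (X j) (walk_inv (m0 j))" "wend (QH n) (X j) (walk_inv (m0 j)) = X 1"
    using walk_inv_chain[OF m(1)] m(2) assms by auto
  have ar: "\<forall>l\<in>set (walk_inv (m0 j)). larr l \<in> arrs (QH n)"
    using larr_walk_inv'[of "m0 j" "\<lambda>a. a \<in> arrs (QH n)"] m(3) assms by simp
  have T: "wchain (QH n) (X j) (T_walk j)" "wend (QH n) (X j) (T_walk j) = X j"
    by (simp_all add: T_walk_def)
  have Ta: "\<forall>l\<in>set (T_walk j). larr l \<in> arrs (QH n)"
    using assms by (auto simp: T_walk_def arrs_QH)
  have c: "wchain (QH n) (X 1) (alpha j)"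
    unfolding alpha_def wchain_append wend_append using m(1,2) T inv assms by simp
  have e: "wend (QH n) (X 1) (alpha j) = X 1"
    unfolding alpha_def wend_append using m(2) T inv assms by simp
  have a: "\<forall>l\<in>set (alpha j). larr l \<in> arrs (QH n)"
    unfolding alpha_def using m(3) Ta ar assms by auto
  show ?thesis using c e a verts_X[of 1 n] assms by (simp add: is_walk_def)
qed

lemma concat_alpha_walk:
  assumes "\<forall>j\<in>set js. 1 \<le> j \<and> j \<le> n" "1 \<le> n"
  shows "is_walk (QH n) (X 1, concat (map alpha js)) \<and> wend (QH n) (X 1) (concat (map alpha js)) = X 1"
  using assms
proof (induction js)
  case Nil then show ?case using verts_X[of 1 n] by (simp add: is_walk_def)
next
  case (Cons j js)
  then show ?case using alpha_walk[of j n] is_walk_append[OF qwf_QH]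
    by (simp add: wend_append)
qed

lemma foldr_alpha:
  assumes IC: "I \<subseteq> pa_carrier (QH n)" and "\<forall>j\<in>set js. 1 \<le> j \<and> j \<le> n" "1 \<le> n"
  shows "foldr (\<lambda>j acc. hclass (QH n) I (X 1, alpha j) \<otimes>\<^bsub>pi1 (QH n) I (X 1)\<^esub> acc)
           js \<one>\<^bsub>pi1 (QH n) I (X 1)\<^esub> = hclass (QH n) I (X 1, concat (map alpha js))"
  using assms(2)
proof (induction js)
  case Nil then show ?case by (simp add: pi1_def)
next
  case (Cons j js)
  have "hclass (QH n) I (X 1, alpha j) \<otimes>\<^bsub>pi1 (QH n) I (X 1)\<^esub> hclass (QH n) I (X 1, concat (map alpha js))
      = hclass (QH n) I (X 1, alpha j @ concat (map alpha js))"
    apply (rule pi1_mult[OF qwf_QH IC])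
    using alpha_walk[of j n] concat_alpha_walk[of js n] Cons.prems assms(3) by auto
  then show ?case using Cons by simp
qed

definition tgtw :: "nat \<Rightarrow> nat \<Rightarrow> qha letter list" where
  "tgtw i k = m0 i @ map Fw (snd (A_path i k)) @ walk_inv (map Fw (snd (a_path i k))) @ walk_inv (m0 i)"

lemma m0_split: "1 \<le> i \<Longrightarrow> i \<le> j \<Longrightarrow> m0 j = m0 i @ map (\<lambda>j. Fw (Aarr j)) [i..<j]"
  unfolding m0_def by (metis le_add_diff_inverse map_append upt_add_eq_append)

lemma main_chain:
  assumes IC: "I \<subseteq> pa_carrier (QH n)" and i: "1 \<le> i"
  shows "i + k \<le> n \<Longrightarrow> htpy (QH n) I (X 1, concat (map alpha [i..<i+k+1])) (X 1, tgtw i k)"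
proof (induction k)
  case 0
  have "concat (map alpha [i..<i+0+1]) = tgtw i 0"
    by (simp add: tgtw_def alpha_def T_walk_def A_path_def a_path_def walk_inv_def)
  then show ?case using htpy.refl[of "QH n" "(X 1, tgtw i 0)" I] alpha_walk[of i n] 0 i by simp
next
  case (Suc k)
  define j where "j = i + k + 1"
  define M where "M = m0 i"
  define av where "av = map (\<lambda>j. Fw (Aarr j)) [i..<i+k+1]"
  define Av where "Av = map Fw (concat (map (\<lambda>j. [Rarr j, Larr j]) [i..<i+k+1]))"
  have n1: "1 \<le> n" using Suc i by simp
  have tk: "tgtw i k = M @ Av @ walk_inv av @ walk_inv M"
    by (simp add: tgtw_def M_def Av_def av_def A_path_def a_path_def comp_def)
  have tk1: "tgtw i (Suc k) = M @ Av @ T_walk j @ walk_inv av @ walk_inv M"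
    by (simp add: tgtw_def M_def Av_def av_def A_path_def a_path_def comp_def j_def T_walk_def
        walk_inv_append walk_inv_def)
  have mj: "m0 j = M @ av" using m0_split[OF i, of j] by (simp add: M_def av_def j_def)
  have aj: "alpha j = M @ av @ T_walk j @ walk_inv av @ walk_inv M"
    by (simp add: alpha_def mj walk_inv_append)
  have cs: "concat (map alpha [i..<i+Suc k+1]) = concat (map alpha [i..<i+k+1]) @ alpha j"
    by (simp add: j_def)
  have wc: "is_walk (QH n) (X 1, concat (map alpha [i..<i+k+1]) @ alpha j)"
    using concat_alpha_walk[of "[i..<i+Suc k+1]" n] Suc.prems i n1 cs by auto
  have h1: "htpy (QH n) I (X 1, concat (map alpha [i..<i+k+1]) @ alpha j) (X 1, tgtw i k @ alpha j)"
    using htpy_mid[OF qwf_QH IC Suc.IH, of "X 1" "[]" "alpha j"] Suc.prems wc by simp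
  have e2: "tgtw i k @ alpha j = (M @ Av @ walk_inv av) @ walk_inv M @ walk_inv (walk_inv M) @
              (av @ T_walk j @ walk_inv av @ walk_inv M)"
    by (simp add: tk aj)
  have w2: "is_walk (QH n) (X 1, (M @ Av @ walk_inv av) @ walk_inv M @ walk_inv (walk_inv M) @
              (av @ T_walk j @ walk_inv av @ walk_inv M))"
    using htpy_props[OF qwf_QH IC h1] e2 by simp
  note h2 = cancel_walk[OF qwf_QH IC w2]
  have e3: "(M @ Av @ walk_inv av) @ av @ T_walk j @ walk_inv av @ walk_inv M =
     (M @ Av) @ walk_inv av @ walk_inv (walk_inv av) @ (T_walk j @ walk_inv av @ walk_inv M)"
    by simp
  have w3: "is_walk (QH n) (X 1, (M @ Av) @ walk_inv av @ walk_inv (walk_inv av) @ (T_walk j @ walk_inv av @ walk_inv M))"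
    using htpy_props[OF qwf_QH IC h2] e3 by simp
  note h3 = cancel_walk[OF qwf_QH IC w3]
  have h2': "htpy (QH n) I (X 1, tgtw i k @ alpha j) (X 1, (M @ Av) @ walk_inv av @ walk_inv (walk_inv av) @ (T_walk j @ walk_inv av @ walk_inv M))"
    using h2 unfolding e2 e3 .
  have h3': "htpy (QH n) I (X 1, (M @ Av) @ walk_inv av @ walk_inv (walk_inv av) @ (T_walk j @ walk_inv av @ walk_inv M)) (X 1, tgtw i (Suc k))"
    using h3 unfolding tk1 by simp
  have "htpy (QH n) I (X 1, tgtw i k @ alpha j) (X 1, tgtw i (Suc k))"
    by (rule htpy.trans[OF h2' h3'])
  from htpy.trans[OF h1 this] show ?case unfolding cs .
qed

theorem mainTheorem5:
  fixes I :: "((qhv, qha) qpath \<Rightarrow> 'k::field) set" and n i k' :: nat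
  assumes "n \<ge> 1" and "i \<ge> 1" and "i + k' \<le> n"
    and "admissible (QH n) I"
    and "minimal_relation (QH n) I (X i) (X (i + k' + 1))
           (\<lambda>p. if p = a_path i k' \<or> p = A_path i k' then 1 else 0)"
  shows "foldr (\<lambda>j acc. hclass (QH n) I (X 1, alpha j) \<otimes>\<^bsub>pi1 (QH n) I (X 1)\<^esub> acc)
           [i..<i + k' + 1] \<one>\<^bsub>pi1 (QH n) I (X 1)\<^esub>
         = \<one>\<^bsub>pi1 (QH n) I (X 1)\<^esub>"
proof -
  have IC: "I \<subseteq> pa_carrier (QH n)" using assms(4) by (simp add: admissible_def pa_ideal_def)
  have f: "foldr (\<lambda>j acc. hclass (QH n) I (X 1, alpha j) \<otimes>\<^bsub>pi1 (QH n) I (X 1)\<^esub> acc)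
           [i..<i + k' + 1] \<one>\<^bsub>pi1 (QH n) I (X 1)\<^esub> = hclass (QH n) I (X 1, concat (map alpha [i..<i + k' + 1]))"
    using foldr_alpha[OF IC, of "[i..<i + k' + 1]"] assms by auto
  note h1 = main_chain[OF IC assms(2) assms(3)]
  define M where "M = m0 i"
  define av where "av = map Fw (snd (a_path i k'))"
  define Av where "Av = map Fw (snd (A_path i k'))"
  have tk: "tgtw i k' = M @ Av @ walk_inv av @ walk_inv M"
    by (simp add: tgtw_def M_def Av_def av_def)
  have hr: "htpy (QH n) I (fst (A_path i k'), map Fw (snd (A_path i k'))) (fst (a_path i k'), map Fw (snd (a_path i k')))"
    by (rule htpy.rel[OF assms(5)]) auto
  then have hr': "htpy (QH n) I (X i, Av) (X i, av)" by (simp add: A_path_def a_path_def Av_def av_def)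
  have w1: "is_walk (QH n) (X 1, M @ Av @ (walk_inv av @ walk_inv M))"
    using htpy_props[OF qwf_QH IC h1] tk by simp
  have eM: "wend (QH n) (X 1) M = X i" using m0_walk[of i n] assms by (simp add: M_def)
  note h2 = htpy_mid[OF qwf_QH IC hr' w1 eM]
  have w2: "is_walk (QH n) (X 1, M @ av @ walk_inv av @ walk_inv M)"
    using htpy_props[OF qwf_QH IC h2] by simp
  note h3 = cancel_walk[OF qwf_QH IC w2]
  have w3: "is_walk (QH n) (X 1, [] @ M @ walk_inv M @ [])"
    using htpy_props[OF qwf_QH IC h3] by simp
  note h4 = cancel_walk[OF qwf_QH IC w3]
  have "htpy (QH n) I (X 1, concat (map alpha [i..<i + k' + 1])) (X 1, [])"
  proof -
    have h1': "htpy (QH n) I (X 1, concat (map alpha [i..<i + k' + 1])) (X 1, M @ Av @ walk_inv av @ walk_inv M)"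
      using h1 unfolding tk .
    have h4': "htpy (QH n) I (X 1, M @ walk_inv M) (X 1, [])" using h4 by simp
    show ?thesis by (rule htpy.trans[OF htpy.trans[OF htpy.trans[OF h1' h2] h3] h4'])
  qed
  then show ?thesis using f hclass_eq by (simp add: pi1_def)
qed

end
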